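(* Assume Conditions A, B, C and D (defined in the context) and let $t_n=f_ng_n$, $r_n=f_n/b_n$. Then for any $a,d>0$ and $T>0$, for any $\delta>0$, for $P$-a.e. environment $\boldsymbol{\tau}$, for all $n$ large enough, $$\mathbb{E}\Big[\sum_{i=0}^{Tr_n}\tau_{Y_n(i)}e_i\mathbf{1}\{Y_n(i)\in T^a(n)\}\,\Big|\,\boldsymbol{\tau}\Big]\le(a+d)^{1/\alpha_n}t_n .$$
   Context: Setting. For each $n$, $\mathcal{G}_n=(\mathcal{V}_n,\mathcal{E}_n)$ is a finite connected graph with fixed vertex $0$; depths $\tau_x>0$ random with law $P_n$, independent across $n$ on a common space with law $P$. Given $\boldsymbol{\tau}$, $Y_n$ is simple random walk on $\mathcal{G}_n$ from $0$ with law $\mathbb{P}$ and expectation $\mathbb{E}$ ($\mathbb{P}_x,\mathbb{E}_x$ from $x$); $(e_i)_{i\ge0}$ i.i.d. Exp(1) independent of everything. $H_n(A)=\inf\{i\ge0:Y_n(i)\in A\}$, $G^n_T(x,y)=\mathbb{E}_x[\sum_{i=0}^{T-1}\mathbf{1}\{Y_n(i)=y\}]$, $G^n_A=G^n_{H_n(A)}$; percolation cloud of density $\rho$: vertices included independently with probability $\rho$. Condition A: $(\tau_x)_x$ i.i.d. for each $n$; there are $\alpha_n,b_n\to0$, $g_n\to\infty$ with $b_n^{-1}P_n(\tau_x\ge u^{1/\alpha_n}g_n)\to1/u$ uniformly on compacts of $(0,\infty)$, and $P_n(\tau_x\ge u^{1/\alpha_n}dg_n)\le Cb_n/(ud^{\alpha_n})$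 for all $u,d>0,n$. Condition B: there are $f_n\to\infty$, $\mathcal{K}_G$ such that for every $\rho>0$ and percolation clouds $A_n$ of density $\rho b_n$, a.s. $\max_{x\in A_n}|f_n^{-1}G^n_{A_n\setminus\{x\}}(x,x)-\mathcal{K}_G|\to0$. Condition C: with $r_n=f_n/b_n$, there is $\mathcal{K}_r>0$ with, for all $s>0$, a.s. $\max_{x\in A_n\cup\{0\}}|\mathbb{E}_x[e^{-sH_n(A_n\setminus\{x\})/r_n}]-\mathcal{K}_r\rho/(s+\mathcal{K}_r\rho)|\to0$. Condition D: (i) there are $\lambda_n,\mathcal{K}_s>0$ with $\sum_x(e^{\lambda_nG^n_{Tr_n}(0,x)}-1)\le\mathcal{K}_s\lambda_nTr_n$ for all $T>0$, $n$ large, and $\sum_ne^{-c\lambda_nf_n}<\infty$ for some $c>0$; (ii) $\alpha_n\log f_n\to0$. Shallow traps: $T^a(n)=\{x\in\mathcal{V}_n:\tau_x<a^{1/\alpha_n}g_n\}$. *)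

theory Defs
  imports "HOL-Probability.Probability"
begin

definition nbrs :: "'v set \<Rightarrow> ('v \<Rightarrow> 'v \<Rightarrow> bool) \<Rightarrow> 'v \<Rightarrow> 'v set" where
  "nbrs V E x = {y \<in> V. E x y}"

definition srw_step :: "'v set \<Rightarrow> ('v \<Rightarrow> 'v \<Rightarrow> bool) \<Rightarrow> 'v \<Rightarrow> 'v pmf" where
  "srw_step V E x = (if nbrs V E x = {} then return_pmf x else pmf_of_set (nbrs V E x))"

fun walk_path :: "'v set \<Rightarrow> ('v \<Rightarrow> 'v \<Rightarrow> bool) \<Rightarrow> 'v \<Rightarrow> nat \<Rightarrow> 'v list pmf" where
  "walk_path V E x 0 = return_pmf [x]"
| "walk_path V E x (Suc k) =
     bind_pmf (walk_path V E x k) (\<lambda>p. map_pmf (\<lambda>y. p @ [y]) (srw_step V E (last p)))"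

definition green :: "'v set \<Rightarrow> ('v \<Rightarrow> 'v \<Rightarrow> bool) \<Rightarrow> real \<Rightarrow> 'v \<Rightarrow> 'v \<Rightarrow> real" where
  "green V E t x y = (\<Sum>i\<in>{i::nat. real i < t}.
       measure_pmf.prob (walk_path V E x i) {p. p ! i = y})"

definition green_hit :: "'v set \<Rightarrow> ('v \<Rightarrow> 'v \<Rightarrow> bool) \<Rightarrow> 'v set \<Rightarrow> 'v \<Rightarrow> 'v \<Rightarrow> ennreal" where
  "green_hit V E A x y = (\<Sum>k. ennreal (measure_pmf.prob (walk_path V E x k)
       {p. p ! k = y \<and> (\<forall>j\<le>k. p ! j \<notin> A)}))"

text \<open>Laplace transform E_x[exp(-theta H(A))], with exp(-theta * infinity) = 0.\<close>
definition hit_laplace :: "'v set \<Rightarrow> ('v \<Rightarrow> 'v \<Rightarrow> bool) \<Rightarrow> 'v set \<Rightarrow> 'v \<Rightarrow> real \<Rightarrow> real" where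
  "hit_laplace V E A x \<theta> = (\<Sum>k. measure_pmf.prob (walk_path V E x k)
       {p. p ! k \<in> A \<and> (\<forall>j<k. p ! j \<notin> A)} * exp (- \<theta> * real k))"

text \<open>Percolation clouds: for each n, vertex x is in A_n independently with probability
  rho * b n (independent also across n), realised on a canonical product space.\<close>
definition cloud_space :: "(nat \<Rightarrow> real) \<Rightarrow> real \<Rightarrow> (nat \<times> 'v \<Rightarrow> bool) measure" where
  "cloud_space b \<rho> = PiM (UNIV :: (nat \<times> 'v) set)
       (\<lambda>nx. measure_pmf (bernoulli_pmf (\<rho> * b (fst nx))))"

definition cloud :: "(nat \<Rightarrow> 'v set) \<Rightarrow> (nat \<times> 'v \<Rightarrow> bool) \<Rightarrow> nat \<Rightarrow> 'v set" where
  "cloud V \<omega> n = {x \<in> V n. \<omega> (n, x)}"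

definition exp_clocks :: "(nat \<Rightarrow> real) measure" where
  "exp_clocks = PiM (UNIV :: nat set) (\<lambda>_. density lborel (exponential_density 1))"

definition shallow :: "'v set \<Rightarrow> ('v \<Rightarrow> real) \<Rightarrow> real \<Rightarrow> real \<Rightarrow> real \<Rightarrow> 'v set" where
  "shallow V \<tau> \<alpha> g a = {x \<in> V. \<tau> x < a powr (1 / \<alpha>) * g}"

definition trap_sum_exp :: "'v set \<Rightarrow> ('v \<Rightarrow> 'v \<Rightarrow> bool) \<Rightarrow> 'v \<Rightarrow> ('v \<Rightarrow> real) \<Rightarrow> 'v set \<Rightarrow> nat \<Rightarrow> real" where
  "trap_sum_exp V E x0 \<tau> S N = measure_pmf.expectation (walk_path V E x0 N)
     (\<lambda>p. integral\<^sup>L exp_clocks (\<lambda>e. \<Sum>i\<le>N. \<tau> (p ! i) * e i * indicator S (p ! i)))"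

end

theory Submission
  imports Defs
begin


lemma walk_len: "p \<in> set_pmf (walk_path V E x k) \<Longrightarrow> length p = Suc k"
  by (induction k arbitrary: p) auto

lemma walk_marg: "i \<le> k \<Longrightarrow> map_pmf (\<lambda>p. p ! i) (walk_path V E x k) = map_pmf (\<lambda>p. p ! i) (walk_path V E x i)"
proof (induction k)
  case 0 then show ?case by simp
next
  case (Suc k)
  show ?case
  proof (cases "i = Suc k")
    case False
    then have ik: "i \<le> k" using Suc by simp
    have "map_pmf (\<lambda>p. p ! i) (walk_path V E x (Suc k)) =
      bind_pmf (walk_path V E x k) (\<lambda>p. map_pmf (\<lambda>y. (p @ [y]) ! i) (srw_step V E (last p)))"
      by (simp add: map_bind_pmf map_pmf_comp)
    also have "\<dots> = bind_pmf (walk_path V E x k) (\<lambda>p. return_pmf (p ! i))"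
    proof (rule bind_pmf_cong[OF refl])
      fix p assume "p \<in> set_pmf (walk_path V E x k)"
      then have "length p = Suc k" by (rule walk_len)
      then have "\<And>y. (p @ [y]) ! i = p ! i" using ik by (simp add: nth_append)
      then show "map_pmf (\<lambda>y. (p @ [y]) ! i) (srw_step V E (last p)) = return_pmf (p ! i)"
        by (simp add: map_pmf_const)
    qed
    also have "\<dots> = map_pmf (\<lambda>p. p ! i) (walk_path V E x k)"
      by (simp add: map_pmf_def)
    finally show ?thesis using Suc.IH ik by simp
  qed simp
qed

lemma walk_marg_prob: "i \<le> k \<Longrightarrow> measure_pmf.prob (walk_path V E x k) {p. p ! i = y}
   = measure_pmf.prob (walk_path V E x i) {p. p ! i = y}"
proof -
  assume "i \<le> k"
  have "measure_pmf.prob (walk_path V E x k) {p. p ! i = y} = measure_pmf.prob (map_pmf (\<lambda>p. p ! i) (walk_path V E x k)) {y}"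
    by (simp add: vimage_def)
  also have "\<dots> = measure_pmf.prob (map_pmf (\<lambda>p. p ! i) (walk_path V E x i)) {y}"
    using walk_marg[OF \<open>i \<le> k\<close>, of V E x] by (simp only:)
  also have "\<dots> = measure_pmf.prob (walk_path V E x i) {p. p ! i = y}"
    by (simp add: vimage_def)
  finally show ?thesis .
qed



lemma expd_prob: "prob_space (density lborel (exponential_density (1::real)))"
  by (rule prob_space_exponential_density) simp

lemma expd_int: "integrable (density lborel (exponential_density (1::real))) (\<lambda>x. x) \<and>
   integral\<^sup>L (density lborel (exponential_density (1::real))) (\<lambda>x. x) = 1"
proof -
  interpret prob_space "density lborel (exponential_density (1::real))" by (rule expd_prob)
  have d: "distributed (density lborel (exponential_density (1::real))) lborel (\<lambda>x. x) (exponential_density 1)"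
    unfolding distributed_def
    by (auto simp: exponential_density_nonneg distr_id2)
  have e: "expectation (\<lambda>x. x) = 1"
    using exponential_distributed_expectation[OF _ d] by simp
  then have "integrable (density lborel (exponential_density (1::real))) (\<lambda>x. x)"
    using not_integrable_integral_eq by fastforce
  with e show ?thesis by simp
qed

lemma clocks_prob: "prob_space exp_clocks"
  unfolding exp_clocks_def by (rule prob_space_PiM) (rule expd_prob)

lemma clocks_int: "integrable exp_clocks (\<lambda>e. e i) \<and> integral\<^sup>L exp_clocks (\<lambda>e. e i) = 1"
proof -
  have D: "distr exp_clocks (density lborel (exponential_density (1::real))) (\<lambda>e. e i)
      = density lborel (exponential_density 1)"
    unfolding exp_clocks_def by (rule distr_PiM_component) (auto intro: expd_prob)
  have m: "(\<lambda>e. e i) \<in> measurable exp_clocks (density lborel (exponential_density (1::real)))"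
    unfolding exp_clocks_def by simp
  have "integrable exp_clocks (\<lambda>e. e i)"
    using integrable_distr_eq[OF m, of "\<lambda>x. x"] D expd_int by simp
  moreover have "integral\<^sup>L exp_clocks (\<lambda>e. e i) = 1"
    using integral_distr[OF m, of "\<lambda>x. x"] D expd_int by simp
  ultimately show ?thesis by simp
qed



lemma inner_clock: "integral\<^sup>L exp_clocks (\<lambda>e. \<Sum>i\<le>N. c i * e i) = (\<Sum>i\<le>N. c i)"
proof -
  have "integral\<^sup>L exp_clocks (\<lambda>e. \<Sum>i\<le>N. c i * e i) = (\<Sum>i\<le>N. integral\<^sup>L exp_clocks (\<lambda>e. c i * e i))"
    by (rule Bochner_Integration.integral_sum) (use clocks_int in auto)
  also have "\<dots> = (\<Sum>i\<le>N. c i)" using clocks_int by simp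
  finally show ?thesis .
qed

lemma trap_formula:
  assumes fin: "finite V" and SV: "S \<subseteq> V"
  shows "trap_sum_exp V E x0 \<tau> S N = (\<Sum>y\<in>V. \<tau> y * indicator S y *
            (\<Sum>i\<le>N. measure_pmf.prob (walk_path V E x0 i) {p. p ! i = y}))"
proof -
  define h where "h y = \<tau> y * indicator S y" for y
  have h0: "y \<notin> V \<Longrightarrow> h y = 0" for y using SV by (auto simp: h_def indicator_def)
  have hb: "\<bar>h z\<bar> \<le> (\<Sum>y\<in>V. \<bar>h y\<bar>)" for z
    by (cases "z \<in> V") (auto simp: h0 fin intro: member_le_sum)
  have "trap_sum_exp V E x0 \<tau> S N = measure_pmf.expectation (walk_path V E x0 N) (\<lambda>p. \<Sum>i\<le>N. h (p ! i))"
  proof -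
    have "\<And>p. integral\<^sup>L exp_clocks (\<lambda>e. \<Sum>i\<le>N. \<tau> (p ! i) * e i * indicator S (p ! i))
       = (\<Sum>i\<le>N. h (p ! i))"
    proof -
      fix p
      have "(\<lambda>e. \<Sum>i\<le>N. \<tau> (p ! i) * e i * indicator S (p ! i)) = (\<lambda>e. \<Sum>i\<le>N. h (p ! i) * e i)"
        by (simp add: h_def mult_ac)
      then show "?thesis p" by (simp add: inner_clock)
    qed
    then show ?thesis unfolding trap_sum_exp_def by simp
  qed
  also have "\<dots> = (\<Sum>i\<le>N. measure_pmf.expectation (walk_path V E x0 N) (\<lambda>p. h (p ! i)))"
    by (rule Bochner_Integration.integral_sum)
       (auto intro!: measure_pmf.integrable_const_bound[where B="\<Sum>y\<in>V. \<bar>h y\<bar>"] simp: hb)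
  also have "\<dots> = (\<Sum>i\<le>N. \<Sum>y\<in>V. h y * measure_pmf.prob (walk_path V E x0 i) {p. p ! i = y})"
  proof (rule sum.cong[OF refl])
    fix i assume i: "i \<in> {..N}"
    have pw: "h (p ! i) = (\<Sum>y\<in>V. h y * indicator {p. p ! i = y} p)" for p
    proof (cases "p ! i \<in> V")
      case True
      then have "(\<Sum>y\<in>V. h y * indicator {p. p ! i = y} p) = (\<Sum>y\<in>{p ! i}. h y * indicator {p. p ! i = y} p)"
        by (intro sum.mono_neutral_right) (auto simp: fin)
      then show ?thesis by simp
    next
      case False
      then show ?thesis by (auto simp: h0 indicator_def intro!: sum.neutral)
    qed
    have "measure_pmf.expectation (walk_path V E x0 N) (\<lambda>p. h (p ! i))
       = measure_pmf.expectation (walk_path V E x0 N) (\<lambda>p. \<Sum>y\<in>V. h y * indicator {p. p ! i = y} p)"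
      by (simp only: pw)
    also have "\<dots> = (\<Sum>y\<in>V. h y * measure_pmf.prob (walk_path V E x0 N) {p. p ! i = y})"
      by (subst Bochner_Integration.integral_sum) (auto intro!: measure_pmf.integrable_const_bound[where B=1])
    also have "\<dots> = (\<Sum>y\<in>V. h y * measure_pmf.prob (walk_path V E x0 i) {p. p ! i = y})"
      using i by (intro sum.cong refl) (simp add: walk_marg_prob[of i N])
    finally show "measure_pmf.expectation (walk_path V E x0 N) (\<lambda>p. h (p ! i)) = \<dots>" .
  qed
  also have "\<dots> = (\<Sum>y\<in>V. h y * (\<Sum>i\<le>N. measure_pmf.prob (walk_path V E x0 i) {p. p ! i = y}))"
    by (subst sum.swap) (simp add: sum_distrib_left)
  finally show ?thesis by (simp add: h_def)
qed



lemma pw_bound: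
  fixes y :: real
  assumes "0 < y"
  shows "(if y < 1 then y else 0) \<le> (\<Sum>k<K. (1/4)^k * (if (1/4)^(k+1) \<le> y then 1 else 0)) + (1/4)^K"
proof (cases "y < 1")
  case False
  then show ?thesis by (auto intro!: add_nonneg_nonneg sum_nonneg)
next
  case True
  have "y \<le> (\<Sum>k<K. (1/4::real)^k * (if (1/4)^(k+1) \<le> y then 1 else 0)) + (1/4)^K"
  proof (induction K)
    case 0 then show ?case using True by simp
  next
    case (Suc K)
    show ?case
    proof (cases "(1/4::real)^(K+1) \<le> y")
      case True
      have "(\<Sum>k<Suc K. (1/4::real)^k * (if (1/4)^(k+1) \<le> y then 1 else 0)) + (1/4)^(Suc K)
          = (\<Sum>k<K. (1/4::real)^k * (if (1/4)^(k+1) \<le> y then 1 else 0)) + (1/4)^K + (1/4)^(Suc K)"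
        using True by simp
      moreover have "(0::real) \<le> (1/4)^(Suc K)" by simp
      ultimately show ?thesis using Suc by linarith
    next
      case False
      have "0 \<le> (\<Sum>k<K. (1/4::real)^k * (if (1/4)^(k+1) \<le> y then 1 else 0))"
        by (auto intro!: sum_nonneg)
      then show ?thesis using False by simp
    qed
  qed
  then show ?thesis using True by simp
qed

lemma pow_powr_half: "((1/4::real)^(k+1)) powr (1/2) = (1/2)^(k+1)"
proof -
  have h: "(1/4::real) = (1/2)^2" by (simp add: power2_eq_square)
  have "((1/4::real)^(k+1)) = ((1/2)^(k+1))^2" unfolding h power_mult[symmetric] by (simp add: mult.commute)
  then show ?thesis by (simp add: powr_half_sqrt)
qed

lemma EX_bound:
  fixes P :: "'w measure" and Y :: "'w \<Rightarrow> real"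
  assumes P: "prob_space P" and Ym: "Y \<in> borel_measurable P"
    and Ypos: "\<And>\<omega>. \<omega> \<in> space P \<Longrightarrow> Y \<omega> > 0"
    and al: "0 < \<alpha>" "\<alpha> \<le> 1/2"
    and tail: "\<And>s. 0 < s \<Longrightarrow> s \<le> 1 \<Longrightarrow> measure P {\<omega>\<in>space P. s \<le> Y \<omega>} \<le> q / s powr \<alpha>"
  shows "integral\<^sup>L P (\<lambda>\<omega>. if Y \<omega> < 1 then Y \<omega> else 0) \<le> 4 * q"
proof -
  interpret prob_space P by (rule P)
  have q0: "0 \<le> q" using order.trans[OF measure_nonneg tail[of 1]] by simp
  have p4: "(1/4::real)^k \<le> 4" for k
    using power_le_one[of "1/4::real" k] by simp
  have key: "integral\<^sup>L P (\<lambda>\<omega>. if Y \<omega> < 1 then Y \<omega> else 0) \<le> 4 * q + (1/4)^K" for K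
  proof -
    define I where "I k = {\<omega>\<in>space P. (1/4::real)^(k+1) \<le> Y \<omega>}" for k
    have Im: "I k \<in> sets P" for k unfolding I_def using Ym by measurable
    have "integral\<^sup>L P (\<lambda>\<omega>. if Y \<omega> < 1 then Y \<omega> else 0)
        \<le> integral\<^sup>L P (\<lambda>\<omega>. (\<Sum>k<K. (1/4)^k * indicator (I k) \<omega>) + (1/4)^K)"
    proof (rule integral_mono)
      show "integrable P (\<lambda>\<omega>. if Y \<omega> < 1 then Y \<omega> else 0)"
      proof (rule integrable_const_bound[where B=1])
        show "AE x in P. norm (if Y x < 1 then Y x else 0) \<le> 1"
          by (rule AE_I2) (auto dest: Ypos)
      qed (use Ym in auto)
      show "integrable P (\<lambda>\<omega>. (\<Sum>k<K. (1/4)^k * indicator (I k) \<omega>) + (1/4::real)^K)"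
        using Im by (intro Bochner_Integration.integrable_add Bochner_Integration.integrable_sum
            Bochner_Integration.integrable_mult_right integrable_real_indicator) (auto simp: emeasure_eq_measure)
      fix \<omega> assume w: "\<omega> \<in> space P"
      show "(if Y \<omega> < 1 then Y \<omega> else 0) \<le> (\<Sum>k<K. (1/4)^k * indicator (I k) \<omega>) + (1/4)^K"
      proof -
        have eq: "(\<Sum>k<K. (1/4::real)^k * indicator (I k) \<omega>) = (\<Sum>k<K. (1/4)^k * (if (1/4)^(k+1) \<le> Y \<omega> then 1 else 0))"
          by (rule sum.cong) (auto simp: I_def w)
        show ?thesis using pw_bound[OF Ypos[OF w], of K] eq by linarith
      qed
    qed
    also have "\<dots> = (\<Sum>k<K. (1/4)^k * measure P (I k)) + (1/4)^K"
    proof -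
      have ik: "integrable P (\<lambda>\<omega>. (1/4::real)^k * indicator (I k) \<omega>)" for k
        using Im by (intro Bochner_Integration.integrable_mult_right integrable_real_indicator)
          (auto simp: emeasure_eq_measure)
      have "integral\<^sup>L P (\<lambda>\<omega>. (\<Sum>k<K. (1/4)^k * indicator (I k) \<omega>) + (1/4::real)^K)
          = integral\<^sup>L P (\<lambda>\<omega>. \<Sum>k<K. (1/4)^k * indicator (I k) \<omega>) + integral\<^sup>L P (\<lambda>\<omega>. (1/4::real)^K)"
        by (rule Bochner_Integration.integral_add) (rule Bochner_Integration.integrable_sum, rule ik, simp)
      also have "integral\<^sup>L P (\<lambda>\<omega>. \<Sum>k<K. (1/4)^k * indicator (I k) \<omega>)
          = (\<Sum>k<K. integral\<^sup>L P (\<lambda>\<omega>. (1/4::real)^k * indicator (I k) \<omega>))"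
        by (rule Bochner_Integration.integral_sum) (rule ik)
      also have "\<dots> = (\<Sum>k<K. (1/4)^k * measure P (I k))"
        using Im by (intro sum.cong refl) simp
      finally show ?thesis by (simp add: prob_space)
    qed
    also have "\<dots> \<le> (\<Sum>k<K. 2 * q * (1/2)^k) + (1/4)^K"
    proof (intro add_right_mono sum_mono)
      fix k
      have "measure P (I k) \<le> q / ((1/4::real)^(k+1)) powr \<alpha>"
        unfolding I_def by (rule tail) (auto simp: p4)
      also have "\<dots> \<le> q / ((1/4::real)^(k+1)) powr (1/2)"
        using q0 al by (intro divide_left_mono powr_mono' mult_pos_pos) (auto simp: p4)
      also have "\<dots> = q * 2^(k+1)" unfolding pow_powr_half by (simp add: power_one_over)
      finally have "(1/4::real)^k * measure P (I k) \<le> (1/4)^k * (q * 2^(k+1))"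
        by (intro mult_left_mono) auto
      also have "\<dots> = 2 * q * (1/2)^k"
        by (simp add: power_one_over field_simps power_mult_distrib[symmetric])
      finally show "(1/4::real)^k * measure P (I k) \<le> 2 * q * (1/2)^k" .
    qed
    also have "(\<Sum>k<K. 2 * q * (1/2::real)^k) \<le> 4 * q"
    proof -
      have "(\<Sum>k<K. (1/2::real)^k) = 2 - 2 * (1/2)^K"
        by (induction K) (auto simp: power_one_over)
      then have "(\<Sum>k<K. (1/2::real)^k) \<le> 2" by simp
      then have "q * (\<Sum>k<K. (1/2::real)^k) \<le> q * 2" using q0 by (rule mult_left_mono)
      then show ?thesis by (simp add: sum_distrib_left[symmetric] mult_ac)
    qed
    finally show ?thesis by simp
  qed
  show ?thesis
  proof (rule field_le_epsilon)
    fix e :: real assume "0 < e"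
    obtain K where "(1/4::real)^K < e"
      using real_arch_pow_inv[OF \<open>0 < e\<close>, of "1/4"] by auto
    then show "integral\<^sup>L P (\<lambda>\<omega>. if Y \<omega> < 1 then Y \<omega> else 0) \<le> 4 * q + e"
      using key[of K] by simp
  qed
qed



lemma exp_cvx: "0 \<le> x \<Longrightarrow> x \<le> (1::real) \<Longrightarrow> exp (c * x) \<le> 1 + x * (exp c - 1)"
  using convex_onD[OF exp_convex, of x 0 c] by (simp add: algebra_simps)

lemma chernoff:
  fixes P :: "'w measure" and t :: "'w \<Rightarrow> 'v \<Rightarrow> real" and V :: "'v set" and G :: "'v \<Rightarrow> real"
  assumes P: "prob_space P" and fin: "finite V"
    and indep: "prob_space.indep_vars P (\<lambda>_. borel) (\<lambda>x \<omega>. t \<omega> x) V"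
    and meas: "\<And>x. x \<in> V \<Longrightarrow> (\<lambda>\<omega>. t \<omega> x) \<in> borel_measurable P"
    and pos: "\<And>\<omega> x. \<omega> \<in> space P \<Longrightarrow> x \<in> V \<Longrightarrow> t \<omega> x > 0"
    and A: "A > 0" and al: "0 < \<alpha>" "\<alpha> \<le> 1/2" and lam: "lam > 0"
    and G: "\<And>x. x \<in> V \<Longrightarrow> G x \<ge> 0"
    and tail: "\<And>x s. x \<in> V \<Longrightarrow> 0 < s \<Longrightarrow> s \<le> 1 \<Longrightarrow>
        measure P {\<omega>\<in>space P. s * A \<le> t \<omega> x} \<le> q / s powr \<alpha>"
  shows "measure P {\<omega>\<in>space P. M \<le> (\<Sum>x\<in>V. G x * (if t \<omega> x < A then t \<omega> x / A else 0))}
       \<le> exp (4 * q * (\<Sum>x\<in>V. exp (lam * G x) - 1) - lam * M)"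
proof -
  interpret prob_space P by (rule P)
  define X where "X x \<omega> = (if t \<omega> x < A then t \<omega> x / A else 0)" for x \<omega>
  define Z where "Z x \<omega> = exp (lam * G x * X x \<omega>)" for x \<omega>
  have Xm: "x \<in> V \<Longrightarrow> X x \<in> borel_measurable P" for x
    unfolding X_def using meas[of x] by measurable
  have X01: "\<omega> \<in> space P \<Longrightarrow> x \<in> V \<Longrightarrow> 0 \<le> X x \<omega> \<and> X x \<omega> \<le> 1" for \<omega> x
    using pos[of \<omega> x] A by (auto simp: X_def)
  have Zm: "x \<in> V \<Longrightarrow> Z x \<in> borel_measurable P" for x
    unfolding Z_def using Xm[of x] by measurable
  have Zb: "\<omega> \<in> space P \<Longrightarrow> x \<in> V \<Longrightarrow> 0 < Z x \<omega> \<and> Z x \<omega> \<le> exp (lam * G x)" for \<omega> x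
  proof -
    assume a: "\<omega> \<in> space P" "x \<in> V"
    have "lam * G x * X x \<omega> \<le> lam * G x * 1"
      using X01[OF a] G[OF a(2)] lam by (intro mult_left_mono) auto
    then show ?thesis unfolding Z_def by simp
  qed
  have Zint: "x \<in> V \<Longrightarrow> integrable P (Z x)" for x
    by (rule integrable_const_bound[where B="exp (lam * G x)"])
       (auto intro!: AE_I2 Zm dest: Zb)
  have Xint: "x \<in> V \<Longrightarrow> integrable P (X x)" for x
    by (rule integrable_const_bound[where B="1"]) (auto intro!: AE_I2 Xm dest: X01)
  have EX: "x \<in> V \<Longrightarrow> integral\<^sup>L P (X x) \<le> 4 * q" for x
  proof -
    assume x: "x \<in> V"
    have "integral\<^sup>L P (\<lambda>\<omega>. if t \<omega> x / A < 1 then t \<omega> x / A else 0) \<le> 4 * q"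
    proof (rule EX_bound[OF P _ _ al])
      show "(\<lambda>\<omega>. t \<omega> x / A) \<in> borel_measurable P" using meas[OF x] by measurable
      show "\<And>\<omega>. \<omega> \<in> space P \<Longrightarrow> 0 < t \<omega> x / A" using pos x A by simp
      fix s :: real assume s: "0 < s" "s \<le> 1"
      have "{\<omega>\<in>space P. s \<le> t \<omega> x / A} = {\<omega>\<in>space P. s * A \<le> t \<omega> x}"
        using A by (auto simp: field_simps)
      then show "measure P {\<omega>\<in>space P. s \<le> t \<omega> x / A} \<le> q / s powr \<alpha>"
        using tail[OF x s] by simp
    qed
    moreover have "(\<lambda>\<omega>. if t \<omega> x / A < 1 then t \<omega> x / A else 0) = X x"
      using A by (auto simp: X_def fun_eq_iff field_simps)
    ultimately show ?thesis by simp
  qed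
  have EZ: "x \<in> V \<Longrightarrow> integral\<^sup>L P (Z x) \<le> exp (4 * q * (exp (lam * G x) - 1))" for x
  proof -
    assume x: "x \<in> V"
    have "integral\<^sup>L P (Z x) \<le> integral\<^sup>L P (\<lambda>\<omega>. 1 + X x \<omega> * (exp (lam * G x) - 1))"
      using Zint[OF x] Xint[OF x]
      by (intro integral_mono) (auto simp: Z_def intro!: exp_cvx dest: X01[OF _ x])
    also have "\<dots> = 1 + integral\<^sup>L P (X x) * (exp (lam * G x) - 1)"
      using Xint[OF x] by (simp add: prob_space)
    also have "\<dots> \<le> 1 + 4 * q * (exp (lam * G x) - 1)"
      using EX[OF x] G[OF x] lam by (intro add_left_mono mult_right_mono) auto
    also have "\<dots> \<le> exp (4 * q * (exp (lam * G x) - 1))"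
      by (rule exp_ge_add_one_self[THEN order.trans[rotated]]) simp
    finally show ?thesis .
  qed
  have indZ: "indep_vars (\<lambda>_. borel) Z V"
  proof -
    have "indep_vars (\<lambda>_. borel) (\<lambda>x \<omega>. (\<lambda>y. exp (lam * G x * (if y < A then y / A else 0))) (t \<omega> x)) V"
      by (rule indep_vars_compose2[OF indep]) measurable
    moreover have "Z = (\<lambda>x \<omega>. exp (lam * G x * (if t \<omega> x < A then t \<omega> x / A else 0)))"
      by (simp add: fun_eq_iff Z_def X_def)
    ultimately show ?thesis by simp
  qed
  have EP: "integral\<^sup>L P (\<lambda>\<omega>. \<Prod>x\<in>V. Z x \<omega>) \<le> exp (4 * q * (\<Sum>x\<in>V. exp (lam * G x) - 1))"
  proof -
    have "integral\<^sup>L P (\<lambda>\<omega>. \<Prod>x\<in>V. Z x \<omega>) = (\<Prod>x\<in>V. integral\<^sup>L P (Z x))"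
      by (rule indep_vars_lebesgue_integral[OF fin indZ Zint])
    also have "\<dots> \<le> (\<Prod>x\<in>V. exp (4 * q * (exp (lam * G x) - 1)))"
      by (rule prod_mono) (auto intro!: integral_nonneg_AE AE_I2 EZ dest: Zb less_imp_le)
    also have "\<dots> = exp (4 * q * (\<Sum>x\<in>V. exp (lam * G x) - 1))"
      by (simp add: exp_sum[OF fin, symmetric] sum_distrib_left)
    finally show ?thesis .
  qed
  have PZint: "integrable P (\<lambda>\<omega>. \<Prod>x\<in>V. Z x \<omega>)"
    by (rule indep_vars_integrable[OF fin indZ Zint])
  have "{\<omega>\<in>space P. M \<le> (\<Sum>x\<in>V. G x * X x \<omega>)} = {\<omega>\<in>space P. exp (lam * M) \<le> (\<Prod>x\<in>V. Z x \<omega>)}"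
  proof -
    have pe: "(\<Prod>x\<in>V. Z x \<omega>) = exp (lam * (\<Sum>x\<in>V. G x * X x \<omega>))" for \<omega>
      by (simp add: Z_def exp_sum[OF fin, symmetric] sum_distrib_left mult_ac)
    show ?thesis unfolding pe using lam by auto
  qed
  then have "measure P {\<omega>\<in>space P. M \<le> (\<Sum>x\<in>V. G x * X x \<omega>)}
      \<le> integral\<^sup>L P (\<lambda>\<omega>. \<Prod>x\<in>V. Z x \<omega>) / exp (lam * M)"
    using integral_Markov_inequality_measure[OF PZint, of "space P" "exp (lam * M)"]
    by (auto intro!: AE_I2 prod_nonneg dest: Zb less_imp_le)
  also have "\<dots> \<le> exp (4 * q * (\<Sum>x\<in>V. exp (lam * G x) - 1)) / exp (lam * M)"
    by (rule divide_right_mono[OF EP]) simp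
  also have "\<dots> = exp (4 * q * (\<Sum>x\<in>V. exp (lam * G x) - 1) - lam * M)"
    by (simp add: exp_diff)
  finally show ?thesis by (simp add: X_def)
qed

theorem proposition2:
  fixes V :: "nat \<Rightarrow> 'v set" and E :: "nat \<Rightarrow> 'v \<Rightarrow> 'v \<Rightarrow> bool" and x0 :: "nat \<Rightarrow> 'v"
    and P :: "'w measure" and \<tau> :: "nat \<Rightarrow> 'w \<Rightarrow> 'v \<Rightarrow> real"
    and \<alpha> b g f lam :: "nat \<Rightarrow> real" and K_G K_r K_s :: real
    and a d T \<delta> :: real
  assumes
    \<comment> \<open>finite connected simple graphs with root x0 n\<close>
    graph_fin: "\<And>n. finite (V n)"
    and root: "\<And>n. x0 n \<in> V n"
    and edges_in: "\<And>n x y. E n x y \<Longrightarrow> x \<in> V n \<and> y \<in> V n"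
    and edges_sym: "\<And>n x y. E n x y \<Longrightarrow> E n y x"
    and edges_irrefl: "\<And>n x. \<not> E n x x"
    and connected: "\<And>n x y. x \<in> V n \<Longrightarrow> y \<in> V n \<Longrightarrow> (E n)\<^sup>*\<^sup>* x y"
    \<comment> \<open>environment: positive depths, i.i.d. within each n, independent across n\<close>
    and P_prob: "prob_space P"
    and tau_meas: "\<And>n x. x \<in> V n \<Longrightarrow> (\<lambda>\<omega>. \<tau> n \<omega> x) \<in> borel_measurable P"
    and tau_pos: "\<And>n \<omega> x. \<omega> \<in> space P \<Longrightarrow> x \<in> V n \<Longrightarrow> \<tau> n \<omega> x > 0"
    and tau_indep: "\<And>n. prob_space.indep_vars P (\<lambda>_. borel) (\<lambda>x \<omega>. \<tau> n \<omega> x) (V n)"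
    and tau_ident: "\<And>n x y. x \<in> V n \<Longrightarrow> y \<in> V n \<Longrightarrow>
                       distr P borel (\<lambda>\<omega>. \<tau> n \<omega> x) = distr P borel (\<lambda>\<omega>. \<tau> n \<omega> y)"
    and tau_indep_n: "prob_space.indep_vars P (\<lambda>n. PiM (V n) (\<lambda>_. borel))
                        (\<lambda>n \<omega>. restrict (\<tau> n \<omega>) (V n)) UNIV"
    \<comment> \<open>Condition A\<close>
    and alpha_pos: "\<And>n. \<alpha> n > 0" and b_pos: "\<And>n. b n > 0"
    and alpha_lim: "\<alpha> \<longlonglongrightarrow> 0" and b_lim: "b \<longlonglongrightarrow> 0"
    and g_lim: "filterlim g at_top sequentially"
    and condA_lim: "\<And>K. compact K \<Longrightarrow> K \<subseteq> {0<..} \<Longrightarrow> \<forall>\<epsilon>>0. \<forall>\<^sub>F n in sequentially.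
         \<forall>u\<in>K. \<forall>x\<in>V n. \<bar>measure P {\<omega> \<in> space P. \<tau> n \<omega> x \<ge> u powr (1 / \<alpha> n) * g n} / b n
                         - 1 / u\<bar> < \<epsilon>"
    and condA_bound: "\<exists>C. \<forall>u>0. \<forall>d'>0. \<forall>n. \<forall>x\<in>V n.
         measure P {\<omega> \<in> space P. \<tau> n \<omega> x \<ge> u powr (1 / \<alpha> n) * d' * g n}
           \<le> C * b n / (u * d' powr \<alpha> n)"
    \<comment> \<open>Condition B\<close>
    and f_lim: "filterlim f at_top sequentially"
    and condB: "\<forall>\<rho>>0. AE \<omega> in cloud_space b \<rho>. \<forall>\<epsilon>>0. \<forall>\<^sub>F n in sequentially.
         \<forall>x\<in>cloud V \<omega> n.
            green_hit (V n) (E n) (cloud V \<omega> n - {x}) x x < \<infinity> \<and>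
            \<bar>enn2real (green_hit (V n) (E n) (cloud V \<omega> n - {x}) x x) / f n - K_G\<bar> < \<epsilon>"
    \<comment> \<open>Condition C (r_n = f_n / b_n)\<close>
    and K_r_pos: "K_r > 0"
    and condC: "\<forall>\<rho>>0. \<forall>s>0. AE \<omega> in cloud_space b \<rho>. \<forall>\<epsilon>>0. \<forall>\<^sub>F n in sequentially.
         \<forall>x\<in>cloud V \<omega> n \<union> {x0 n}.
            \<bar>hit_laplace (V n) (E n) (cloud V \<omega> n - {x}) x (s / (f n / b n))
               - K_r * \<rho> / (s + K_r * \<rho>)\<bar> < \<epsilon>"
    \<comment> \<open>Condition D\<close>
    and lambda_pos: "\<And>n. lam n > 0" and K_s_pos: "K_s > 0"
    and condD1: "\<forall>T'>0. \<forall>\<^sub>F n in sequentially.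
         (\<Sum>x\<in>V n. exp (lam n * green (V n) (E n) (T' * (f n / b n)) (x0 n) x) - 1)
            \<le> K_s * lam n * T' * (f n / b n)"
    and condD1_sum: "\<exists>c>0. summable (\<lambda>n. exp (- c * lam n * f n))"
    and condD2: "(\<lambda>n. \<alpha> n * ln (f n)) \<longlonglongrightarrow> 0"
    \<comment> \<open>parameters of the proposition\<close>
    and a_pos: "a > 0" and d_pos: "d > 0" and T_pos: "T > 0" and delta_pos: "\<delta> > 0"
  shows "AE \<omega> in P. \<forall>\<^sub>F n in sequentially.
           trap_sum_exp (V n) (E n) (x0 n) (\<tau> n \<omega>)
              (shallow (V n) (\<tau> n \<omega>) (\<alpha> n) (g n) a) (nat \<lfloor>T * (f n / b n)\<rfloor>)
           \<le> (a + d) powr (1 / \<alpha> n) * (f n * g n)"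
proof -
  interpret prob_space P by (rule P_prob)
  obtain C where C: "\<And>u d' n x. u > 0 \<Longrightarrow> d' > 0 \<Longrightarrow> x \<in> V n \<Longrightarrow>
      measure P {\<omega> \<in> space P. \<tau> n \<omega> x \<ge> u powr (1 / \<alpha> n) * d' * g n}
           \<le> C * b n / (u * d' powr \<alpha> n)"
    using condA_bound by blast
  have C0: "C \<ge> 0"
  proof -
    have "0 \<le> C * b 0 / (1 * 1 powr \<alpha> 0)"
      using order.trans[OF measure_nonneg C[of 1 1 "x0 0" 0]] root[of 0] by simp
    then show ?thesis using b_pos[of 0] by (simp add: zero_le_mult_iff)
  qed
  obtain c where c: "c > 0" "summable (\<lambda>n. exp (- c * lam n * f n))"
    using condD1_sum by blast
  define N where "N n = nat \<lfloor>T * (f n / b n)\<rfloor>" for n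
  define Gm where "Gm n x = (\<Sum>i\<le>N n. measure_pmf.prob (walk_path (V n) (E n) (x0 n) i) {p. p ! i = x})" for n x
  define A where "A n = a powr (1 / \<alpha> n) * g n" for n
  define X where "X n \<omega> x = (if \<tau> n \<omega> x < A n then \<tau> n \<omega> x / A n else 0)" for n \<omega> x
  define Mq where "Mq n = ((a + d) / a) powr (1 / \<alpha> n)" for n
  define K0 where "K0 = 8 * C * K_s * T / a"
  define Bad where "Bad n = {\<omega>\<in>space P. Mq n * f n \<le> (\<Sum>x\<in>V n. Gm n x * X n \<omega> x)}" for n
  have Gm0: "Gm n x \<ge> 0" for n x unfolding Gm_def by (auto intro: sum_nonneg)
  have ev_al: "\<forall>\<^sub>F n in sequentially. \<alpha> n \<le> 1/2"
    using order_tendstoD(2)[OF alpha_lim, of "1/2"] by (auto elim: eventually_mono)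
  have ev_g: "\<forall>\<^sub>F n in sequentially. 1 \<le> g n"
    using g_lim unfolding filterlim_at_top by blast
  have ev_f: "\<forall>\<^sub>F n in sequentially. 1 \<le> f n"
    using f_lim unfolding filterlim_at_top by blast
  have ev_D: "\<forall>\<^sub>F n in sequentially.
         (\<Sum>x\<in>V n. exp (lam n * green (V n) (E n) ((2 * T) * (f n / b n)) (x0 n) x) - 1)
            \<le> K_s * lam n * (2 * T) * (f n / b n)"
    using condD1 T_pos by simp
  have ev_M: "\<forall>\<^sub>F n in sequentially. K0 + c \<le> Mq n"
  proof -
    define L where "L = ln ((a + d) / a)"
    have L: "L > 0" unfolding L_def using a_pos d_pos by simp
    have "\<forall>\<^sub>F n in sequentially. \<alpha> n < L / (\<bar>K0 + c\<bar> + 1)"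
      by (rule order_tendstoD(2)[OF alpha_lim]) (use L in simp)
    then show ?thesis
    proof (rule eventually_mono)
      fix n assume h: "\<alpha> n < L / (\<bar>K0 + c\<bar> + 1)"
      have "(\<bar>K0 + c\<bar> + 1) * \<alpha> n < L" using h by (simp add: field_simps)
      then have "\<bar>K0 + c\<bar> + 1 < L / \<alpha> n" using alpha_pos[of n] by (simp add: field_simps)
      also have "L / \<alpha> n \<le> exp (L / \<alpha> n)"
        using exp_ge_add_one_self[of "L / \<alpha> n"] by linarith
      also have "exp (L / \<alpha> n) = Mq n"
        unfolding Mq_def L_def powr_def using a_pos d_pos by simp
      finally show "K0 + c \<le> Mq n" by simp
    qed
  qed
  have Bad_bound: "\<forall>\<^sub>F n in sequentially. measure P (Bad n) \<le> exp (- c * lam n * f n)"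
    using ev_al ev_g ev_f ev_D ev_M
  proof eventually_elim
    case (elim n)
    have fpos: "f n > 0" using elim by simp
    have Apos: "A n > 0" unfolding A_def using elim a_pos by simp
    have al: "0 < \<alpha> n" "\<alpha> n \<le> 1/2" using alpha_pos elim by auto
    define q where "q = C * b n / a"
    have q0: "q \<ge> 0" unfolding q_def using C0 b_pos[of n] a_pos by simp
    have ch: "measure P {\<omega>\<in>space P. Mq n * f n \<le> (\<Sum>x\<in>V n. Gm n x * (if \<tau> n \<omega> x < A n then \<tau> n \<omega> x / A n else 0))}
       \<le> exp (4 * q * (\<Sum>x\<in>V n. exp (lam n * Gm n x) - 1) - lam n * (Mq n * f n))"
    proof (rule chernoff[OF P_prob graph_fin tau_indep tau_meas _ Apos al lambda_pos Gm0])
      show "\<And>\<omega> x. \<omega> \<in> space P \<Longrightarrow> x \<in> V n \<Longrightarrow> 0 < \<tau> n \<omega> x" by (rule tau_pos)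
      fix x and s :: real assume x: "x \<in> V n" and s: "0 < s" "s \<le> 1"
      have "{\<omega>\<in>space P. s * A n \<le> \<tau> n \<omega> x} = {\<omega> \<in> space P. \<tau> n \<omega> x \<ge> a powr (1 / \<alpha> n) * s * g n}"
        unfolding A_def by (simp add: mult_ac)
      also have "measure P \<dots> \<le> C * b n / (a * s powr \<alpha> n)"
        by (rule C[OF a_pos s(1) x])
      also have "\<dots> = q / s powr \<alpha> n" unfolding q_def by simp
      finally show "measure P {\<omega>\<in>space P. s * A n \<le> \<tau> n \<omega> x} \<le> q / s powr \<alpha> n" .
    qed
    have Gg: "Gm n x \<le> green (V n) (E n) ((2 * T) * (f n / b n)) (x0 n) x" for x
    proof -
      have Tr: "0 < T * (f n / b n)" using T_pos fpos b_pos[of n] by simp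
      have sub: "{..N n} \<subseteq> {i::nat. real i < (2 * T) * (f n / b n)}"
      proof
        fix i assume "i \<in> {..N n}"
        then have "real i \<le> real (N n)" by simp
        also have "real (N n) \<le> T * (f n / b n)" unfolding N_def using Tr by linarith
        finally show "i \<in> {i::nat. real i < (2 * T) * (f n / b n)}" using Tr by simp
      qed
      have fin: "finite {i::nat. real i < (2 * T) * (f n / b n)}"
        by (rule finite_subset[of _ "{..nat \<lceil>(2 * T) * (f n / b n)\<rceil>}"]) (auto, linarith)
      show ?thesis unfolding Gm_def green_def
        by (rule sum_mono2[OF fin sub]) auto
    qed
    have "4 * q * (\<Sum>x\<in>V n. exp (lam n * Gm n x) - 1)
        \<le> 4 * q * (\<Sum>x\<in>V n. exp (lam n * green (V n) (E n) ((2 * T) * (f n / b n)) (x0 n) x) - 1)"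
      using q0 lambda_pos[of n] Gg by (intro mult_left_mono sum_mono) (auto intro: mult_left_mono)
    also have "\<dots> \<le> 4 * q * (K_s * lam n * (2 * T) * (f n / b n))"
      using q0 elim by (intro mult_left_mono) auto
    also have "\<dots> = K0 * lam n * f n"
      unfolding q_def K0_def using b_pos[of n] a_pos by (simp add: field_simps)
    finally have s1: "4 * q * (\<Sum>x\<in>V n. exp (lam n * Gm n x) - 1) \<le> K0 * lam n * f n" .
    have "K0 * lam n * f n - lam n * (Mq n * f n) = lam n * f n * (K0 - Mq n)" by (simp add: algebra_simps)
    also have "\<dots> \<le> lam n * f n * (- c)"
      using elim lambda_pos[of n] fpos by (intro mult_left_mono) auto
    finally have s2: "4 * q * (\<Sum>x\<in>V n. exp (lam n * Gm n x) - 1) - lam n * (Mq n * f n) \<le> - c * lam n * f n"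
      using s1 by (simp add: mult_ac)
    have "Bad n = {\<omega>\<in>space P. Mq n * f n \<le> (\<Sum>x\<in>V n. Gm n x * (if \<tau> n \<omega> x < A n then \<tau> n \<omega> x / A n else 0))}"
      unfolding Bad_def X_def ..
    then show ?case using ch s2 by (auto intro: order.trans)
  qed
  have Bad_sets: "Bad n \<in> sets P" for n
  proof -
    have "(\<lambda>\<omega>. \<Sum>x\<in>V n. Gm n x * X n \<omega> x) \<in> borel_measurable P"
    proof (rule borel_measurable_sum)
      fix x assume x: "x \<in> V n"
      show "(\<lambda>\<omega>. Gm n x * X n \<omega> x) \<in> borel_measurable P"
        unfolding X_def using tau_meas[OF x] by measurable
    qed
    then show ?thesis unfolding Bad_def by measurable
  qed
  have summ: "summable (\<lambda>n. measure P (Bad n))"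
    by (rule summable_comparison_test_ev[OF _ c(2)]) (use Bad_bound in \<open>auto elim: eventually_mono\<close>)
  have BC: "AE \<omega> in P. \<forall>\<^sub>F n in sequentially. \<omega> \<in> space P - Bad n"
    by (rule borel_cantelli_AE1[OF Bad_sets _ summ]) (simp add: emeasure_eq_measure)
  show ?thesis
  proof (rule AE_mp[OF BC], rule AE_I2, rule impI)
    fix \<omega> assume w: "\<omega> \<in> space P" and ev: "\<forall>\<^sub>F n in sequentially. \<omega> \<in> space P - Bad n"
    show "\<forall>\<^sub>F n in sequentially.
           trap_sum_exp (V n) (E n) (x0 n) (\<tau> n \<omega>)
              (shallow (V n) (\<tau> n \<omega>) (\<alpha> n) (g n) a) (nat \<lfloor>T * (f n / b n)\<rfloor>)
           \<le> (a + d) powr (1 / \<alpha> n) * (f n * g n)"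
        using ev ev_g
      proof eventually_elim
        case (elim n)
        have Apos: "A n > 0" unfolding A_def using elim a_pos by simp
        have nb: "(\<Sum>x\<in>V n. Gm n x * X n \<omega> x) < Mq n * f n"
          using elim w unfolding Bad_def by auto
        have "trap_sum_exp (V n) (E n) (x0 n) (\<tau> n \<omega>)
              (shallow (V n) (\<tau> n \<omega>) (\<alpha> n) (g n) a) (nat \<lfloor>T * (f n / b n)\<rfloor>)
            = (\<Sum>y\<in>V n. \<tau> n \<omega> y * indicator (shallow (V n) (\<tau> n \<omega>) (\<alpha> n) (g n) a) y * Gm n y)"
          unfolding Gm_def N_def
          by (rule trap_formula[OF graph_fin]) (auto simp: shallow_def)
        also have "\<dots> = (\<Sum>y\<in>V n. A n * (Gm n y * X n \<omega> y))"
          using Apos by (intro sum.cong refl) (auto simp: shallow_def X_def A_def indicator_def)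
        also have "\<dots> = A n * (\<Sum>y\<in>V n. Gm n y * X n \<omega> y)" by (simp add: sum_distrib_left)
        also have "\<dots> \<le> A n * (Mq n * f n)" using nb Apos by simp
        also have "\<dots> = (a powr (1 / \<alpha> n) * ((a + d) / a) powr (1 / \<alpha> n)) * (f n * g n)"
          unfolding A_def Mq_def by (simp add: mult_ac)
        also have "a powr (1 / \<alpha> n) * ((a + d) / a) powr (1 / \<alpha> n) = (a + d) powr (1 / \<alpha> n)"
          using a_pos d_pos by (simp add: powr_mult[symmetric])
        finally show ?case .
      qed
  qed
qed

end
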